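(* Let $q$ be a prime power, $m$ a positive integer with $\gcd(m,q)=1$, $\lambda\in\mathbb{F}_q^*$, and $R_\lambda=\mathbb{F}_q[x]/\langle x^m-\lambda\rangle$. Let $C$ and $D$ be one-generator $\lambda$-quasi-twisted codes of length $2m$ and index $2$ over $\mathbb{F}_q$, i.e. $C$ is the $R_\lambda$-submodule of $R_\lambda^2$ generated by $(g_{11}(x),g_{12}(x))$ and $D$ is the $R_\lambda$-submodule generated by $(f_{11}(x),f_{12}(x))$, where $g_{11}(x)\mid x^m-\lambda$ and $f_{11}(x)\mid x^m-\lambda$. Then $(C,D)$ is a linear complementary pair of codes if and only if: (A) $\gcd(g_{11}(x),g_{12}(x))=1$; (B) $\gcd(f_{11}(x),f_{12}(x))=1$; (C) $\gcd\big(x^m-\lambda,\,g_{11}(x)f_{12}(x)-g_{12}(x)f_{11}(x)\big)=1$.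
   Context: A pair $(C,D)$ of $\mathbb{F}_q$-linear codes of the same length $n$ is a linear complementary pair (LCP) of codes if $C\cap D=\{0\}$ and $C+D=\mathbb{F}_q^n$. For $\lambda\in\mathbb{F}_q^*$, $T_\lambda(x_0,\dots,x_{n-1})=(\lambda x_{n-1},x_0,\dots,x_{n-2})$; a linear code $C\subseteq\mathbb{F}_q^{2m}$ is $\lambda$-quasi-twisted of index $2$ if $T_\lambda^2(C)\subseteq C$, and it is identified with an $R_\lambda$-submodule of $R_\lambda^2$ via $(c_{0,0},c_{0,1},\dots,c_{m-1,0},c_{m-1,1})\mapsto(c_0(x),c_1(x))$, $c_j(x)=\sum_i c_{i,j}x^i$; elements of $R_\lambda$ are represented by polynomials in $\mathbb{F}_q[x]$. *)

theory Defs
  imports "HOL-Computational_Algebra.Computational_Algebra"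
begin

definition xm_minus :: "nat \<Rightarrow> 'a::field \<Rightarrow> 'a poly" where
  "xm_minus m lam = monom 1 m - [:lam:]"

text \<open>The identification R_lambda^2 -> F_q^(2m): the pair (c0,c1) of reduced
  polynomials (degree < m) corresponds to the vector
  (c_{0,0}, c_{0,1}, c_{1,0}, c_{1,1}, ..., c_{m-1,0}, c_{m-1,1}),
  where c_j = sum_i c_{i,j} x^i.\<close>
definition qt_vec :: "nat \<Rightarrow> 'a::zero poly \<Rightarrow> 'a poly \<Rightarrow> 'a list" where
  "qt_vec m c0 c1 = map (\<lambda>k. coeff (if even k then c0 else c1) (k div 2)) [0..<2*m]"

definition one_gen_qt_code :: "nat \<Rightarrow> 'a::field \<Rightarrow> 'a poly \<Rightarrow> 'a poly \<Rightarrow> 'a list set" where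
  "one_gen_qt_code m lam g1 g2 =
     {qt_vec m ((a * g1) mod xm_minus m lam) ((a * g2) mod xm_minus m lam) | a. True}"

definition is_LCP :: "nat \<Rightarrow> 'a::comm_monoid_add list set \<Rightarrow> 'a list set \<Rightarrow> bool" where
  "is_LCP n C D \<longleftrightarrow>
     C \<inter> D = {replicate n 0} \<and>
     {map2 (+) c d | c d. c \<in> C \<and> d \<in> D} = {v. length v = n}"

end

theory Submission
  imports Defs
begin

lemma qt_len: "length (qt_vec m c0 c1) = 2*m"
  by (simp add: qt_vec_def)

lemma qt_even: "i < m \<Longrightarrow> qt_vec m c0 c1 ! (2*i) = coeff c0 i"
  by (simp add: qt_vec_def)

lemma qt_odd: "i < m \<Longrightarrow> qt_vec m c0 c1 ! (2*i+1) = coeff c1 i"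
  by (simp add: qt_vec_def)

lemma qt_add: "map2 (+) (qt_vec m a0 a1) (qt_vec m b0 b1) = qt_vec m (a0+b0) (a1+b1)"
  by (rule nth_equalityI) (auto simp: qt_vec_def)

lemma qt_zero: "qt_vec m 0 0 = replicate (2*m) 0"
  by (rule nth_equalityI) (auto simp: qt_vec_def)

lemma qt_inj:
  assumes "degree c0 < m" "degree c1 < m" "degree d0 < m" "degree d1 < m"
    and "qt_vec m c0 c1 = qt_vec m d0 d1"
  shows "c0 = d0 \<and> c1 = d1"
proof
  show "c0 = d0"
  proof (rule poly_eqI)
    fix i show "coeff c0 i = coeff d0 i"
    proof (cases "i < m")
      case True then show ?thesis using qt_even[of i m c0 c1] qt_even[of i m d0 d1] assms(5) by simp
    next
      case False then show ?thesis using assms by (simp add: coeff_eq_0)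
    qed
  qed
  show "c1 = d1"
  proof (rule poly_eqI)
    fix i show "coeff c1 i = coeff d1 i"
    proof (cases "i < m")
      case True then show ?thesis using qt_odd[of i m c0 c1] qt_odd[of i m d0 d1] assms(5) by simp
    next
      case False then show ?thesis using assms by (simp add: coeff_eq_0)
    qed
  qed
qed

lemma deg_lt_from_coeff:
  assumes "m > 0" "\<And>i. i \<ge> m \<Longrightarrow> coeff p i = 0"
  shows "degree p < m"
proof -
  have "degree p \<le> m - 1"
    by (rule degree_le) (use assms in auto)
  then show ?thesis using assms(1) by linarith
qed

lemma qt_surj:
  assumes "m > 0" "length v = 2*m"
  shows "\<exists>c0 c1. degree c0 < m \<and> degree c1 < m \<and> v = qt_vec m c0 c1"
proof -
  define c0 where "c0 = Poly (map (\<lambda>i. v ! (2*i)) [0..<m])"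
  define c1 where "c1 = Poly (map (\<lambda>i. v ! (2*i+1)) [0..<m])"
  have k0: "coeff c0 i = (if i < m then v ! (2*i) else 0)" for i
    by (simp add: c0_def nth_default_def)
  have k1: "coeff c1 i = (if i < m then v ! (2*i+1) else 0)" for i
    by (simp add: c1_def nth_default_def)
  have "degree c0 < m" by (rule deg_lt_from_coeff) (use assms k0 in auto)
  moreover have "degree c1 < m" by (rule deg_lt_from_coeff) (use assms k1 in auto)
  moreover have "v = qt_vec m c0 c1"
  proof (rule nth_equalityI)
    show "length v = length (qt_vec m c0 c1)" using assms by (simp add: qt_len)
    fix k assume "k < length v"
    then have k: "k < 2*m" using assms by simp
    show "v ! k = qt_vec m c0 c1 ! k"
    proof (cases "even k")
      case True
      then obtain i where "k = 2*i" by blast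
      then show ?thesis using k by (simp add: qt_vec_def k0)
    next
      case False
      then obtain i where "k = 2*i+1" using oddE by blast
      then show ?thesis using k by (simp add: qt_vec_def k1)
    qed
  qed
  ultimately show ?thesis by blast
qed

lemma M_degree: "m > 0 \<Longrightarrow> degree (xm_minus m (lam::'a::field)) = m"
proof -
  assume m: "m > 0"
  have e: "xm_minus m lam = monom 1 m + [:-lam:]" unfolding xm_minus_def by simp
  have d1: "degree (monom (1::'a) m) = m" by (rule degree_monom_eq) simp
  have d2: "degree [:-lam:] = 0" by simp
  have "degree (monom 1 m + [:-lam:]) = degree (monom (1::'a) m)"
    by (rule degree_add_eq_left) (simp only: d1 d2 m)
  then show ?thesis unfolding e d1 .
qed

lemma M_nz: "m > 0 \<Longrightarrow> xm_minus m (lam::'a::field) \<noteq> 0"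
proof
  assume m: "m > 0" and z: "xm_minus m lam = 0"
  have "degree (xm_minus m lam) = m" by (rule M_degree[OF m])
  then show False using z m by simp
qed

lemma deg_mod: "m > 0 \<Longrightarrow> degree (p mod xm_minus m (lam::'a::field)) < m"
proof -
  assume m: "m > 0"
  have "p mod xm_minus m lam = 0 \<or> degree (p mod xm_minus m lam) < degree (xm_minus m lam)"
    by (rule degree_mod_less) (rule M_nz[OF m])
  then show ?thesis using M_degree[OF m, of lam] m by (metis degree_0)
qed

lemma det_lemma:
  fixes M :: "'a::comm_ring_1"
  assumes "M dvd (a*g11 + b*f11 - 1)" "M dvd (a*g12 + b*f12)"
    "M dvd (c*g11 + e*f11)" "M dvd (c*g12 + e*f12 - 1)"
  shows "M dvd ((a*e - b*c) * (g11*f12 - g12*f11) - 1)"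
proof -
  have "(a*e - b*c) * (g11*f12 - g12*f11) - 1 =
     (a*g11 + b*f11 - 1) * (c*g12 + e*f12) + (c*g12 + e*f12 - 1)
      - (a*g12 + b*f12) * (c*g11 + e*f11)" (is "_ = ?R")
    by (simp add: algebra_simps)
  note eq = this
  have h1: "M dvd (a*g11 + b*f11 - 1) * (c*g12 + e*f12)" using assms(1) by (rule dvd_mult2)
  have h2: "M dvd (a*g12 + b*f12) * (c*g11 + e*f11)" using assms(2) by (rule dvd_mult2)
  have h3: "M dvd (a*g11 + b*f11 - 1) * (c*g12 + e*f12) + (c*g12 + e*f12 - 1)"
    by (rule dvd_add[OF h1 assms(4)])
  have "M dvd (a*g11 + b*f11 - 1) * (c*g12 + e*f12) + (c*g12 + e*f12 - 1)
      - (a*g12 + b*f12) * (c*g11 + e*f11)"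
    by (rule dvd_diff[OF h3 h2])
  then show ?thesis by (simp only: eq)
qed

theorem theorem5p4:
  fixes lam :: "'a::{finite,field_gcd}"
    and m :: nat
    and g11 g12 f11 f12 :: "'a poly"
  assumes "m > 0"
    and "coprime m (card (UNIV :: 'a set))"
    and "lam \<noteq> 0"
    and "g11 dvd xm_minus m lam"
    and "f11 dvd xm_minus m lam"
  shows "is_LCP (2*m) (one_gen_qt_code m lam g11 g12) (one_gen_qt_code m lam f11 f12)
     \<longleftrightarrow> gcd g11 g12 = 1 \<and> gcd f11 f12 = 1
         \<and> gcd (xm_minus m lam) (g11 * f12 - g12 * f11) = 1"
proof -
  define M where "M = xm_minus m lam"
  define d where "d = g11 * f12 - g12 * f11"
  have Mdeg: "degree M = m" unfolding M_def by (rule M_degree[OF assms(1)])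
  have dm: "degree (p mod M) < m" for p unfolding M_def by (rule deg_mod[OF assms(1)])
  have cop_gcd: "gcd g11 g12 = 1 \<and> gcd f11 f12 = 1" if cop: "coprime M d"
  proof -
    have "coprime g11 g12"
    proof (rule coprimeI)
      fix c assume "c dvd g11" "c dvd g12"
      then have "c dvd M" "c dvd d" using assms(4) unfolding M_def d_def by (auto intro: dvd_trans)
      then show "is_unit c" using cop coprime_common_divisor by blast
    qed
    moreover have "coprime f11 f12"
    proof (rule coprimeI)
      fix c assume "c dvd f11" "c dvd f12"
      then have "c dvd M" "c dvd d" using assms(5) unfolding M_def d_def by (auto intro: dvd_trans)
      then show "is_unit c" using cop coprime_common_divisor by blast
    qed
    ultimately show ?thesis by (simp add: coprime_iff_gcd_eq_1)
  qed
  let ?C = "one_gen_qt_code m lam g11 g12"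
  let ?D = "one_gen_qt_code m lam f11 f12"
  show ?thesis
  proof
    assume L: "is_LCP (2*m) ?C ?D"
    have get: "\<exists>a b. M dvd (a*g11 + b*f11 - u) \<and> M dvd (a*g12 + b*f12 - w)"
      if du: "degree u < m" and dw: "degree w < m" for u w
    proof -
      have S: "{map2 (+) c d | c d. c \<in> ?C \<and> d \<in> ?D} = {v. length v = 2*m}"
        using L unfolding is_LCP_def by (rule conjunct2)
      have "qt_vec m u w \<in> {map2 (+) c d | c d. c \<in> ?C \<and> d \<in> ?D}"
        unfolding S by (simp add: qt_len)
      then obtain c d where cd: "qt_vec m u w = map2 (+) c d" "c \<in> ?C" "d \<in> ?D"
        by (auto simp only: mem_Collect_eq)
      from cd(2) obtain a where ca: "c = qt_vec m ((a * g11) mod M) ((a * g12) mod M)"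
        unfolding one_gen_qt_code_def M_def by (auto simp only: mem_Collect_eq)
      from cd(3) obtain b where db: "d = qt_vec m ((b * f11) mod M) ((b * f12) mod M)"
        unfolding one_gen_qt_code_def M_def by (auto simp only: mem_Collect_eq)
      have "qt_vec m ((a*g11 + b*f11) mod M) ((a*g12 + b*f12) mod M) = qt_vec m u w"
        unfolding cd(1) ca db qt_add poly_mod_add_left ..
      then have "(a*g11 + b*f11) mod M = u \<and> (a*g12 + b*f12) mod M = w"
        by (rule qt_inj[OF dm dm du dw])
      then have "(a*g11 + b*f11) mod M = u mod M \<and> (a*g12 + b*f12) mod M = w mod M"
        using du dw Mdeg by (simp add: mod_poly_less)
      then show ?thesis by (auto simp: mod_eq_dvd_iff)
    qed
    obtain a b where ab: "M dvd (a*g11 + b*f11 - 1)" "M dvd (a*g12 + b*f12 - 0)"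
      using get[of 1 0] assms(1) by auto
    obtain c e where ce: "M dvd (c*g11 + e*f11 - 0)" "M dvd (c*g12 + e*f12 - 1)"
      using get[of 0 1] assms(1) by auto
    have X: "M dvd ((a*e - b*c) * d - 1)"
      using det_lemma[of M a g11 b f11 g12 f12 c e] ab ce d_def by simp
    have cop: "coprime M d"
    proof (rule coprimeI)
      fix z assume z: "z dvd M" "z dvd d"
      from X obtain k where k: "(a*e - b*c) * d - 1 = M * k" by (auto elim: dvdE)
      have "1 = (a*e - b*c) * d - M * k" using k by (simp add: algebra_simps)
      moreover have "z dvd (a*e - b*c) * d - M * k" using z by (simp add: dvd_diff)
      ultimately show "is_unit z" by simp
    qed
    then show "gcd g11 g12 = 1 \<and> gcd f11 f12 = 1 \<and> gcd (xm_minus m lam) (g11 * f12 - g12 * f11) = 1"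
      using cop_gcd M_def d_def by (simp add: coprime_iff_gcd_eq_1)
  next
    assume R: "gcd g11 g12 = 1 \<and> gcd f11 f12 = 1 \<and> gcd (xm_minus m lam) (g11 * f12 - g12 * f11) = 1"
    then have cop: "coprime M d" using M_def d_def by (simp add: coprime_iff_gcd_eq_1)
    then have "gcd M d = 1" by (simp add: coprime_iff_gcd_eq_1)
    then obtain s e where se: "s * M + e * d = 1"
      using bezout_coefficients_fst_snd[of M d] by metis
    have ed: "M dvd (e*d - 1)"
    proof -
      have "e*d - 1 = M * (- s)" using se by (simp add: algebra_simps)
      then show ?thesis by simp
    qed
    have Z: "replicate (2*m) 0 \<in> one_gen_qt_code m lam p q" for p q
      unfolding one_gen_qt_code_def
      by (rule CollectI, rule exI[of _ 0]) (simp add: qt_zero)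
    have inter: "?C \<inter> ?D = {replicate (2*m) 0}"
    proof
      show "{replicate (2*m) 0} \<subseteq> ?C \<inter> ?D" using Z by auto
      show "?C \<inter> ?D \<subseteq> {replicate (2*m) 0}"
      proof
        fix x assume "x \<in> ?C \<inter> ?D"
        then have xC: "x \<in> ?C" and xD: "x \<in> ?D" by auto
        from xC obtain a where xa: "x = qt_vec m ((a * g11) mod M) ((a * g12) mod M)"
          unfolding one_gen_qt_code_def M_def by (auto simp only: mem_Collect_eq)
        from xD obtain b where xb: "x = qt_vec m ((b * f11) mod M) ((b * f12) mod M)"
          unfolding one_gen_qt_code_def M_def by (auto simp only: mem_Collect_eq)
        have "qt_vec m ((a * g11) mod M) ((a * g12) mod M) = qt_vec m ((b * f11) mod M) ((b * f12) mod M)"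
          using xa xb by simp
        then have "(a * g11) mod M = (b * f11) mod M \<and> (a * g12) mod M = (b * f12) mod M"
          by (rule qt_inj[OF dm dm dm dm])
        then have h1: "M dvd (a*g11 - b*f11)" and h2: "M dvd (a*g12 - b*f12)"
          by (auto simp: mod_eq_dvd_iff)
        have "a * d = (a*g11 - b*f11) * f12 - (a*g12 - b*f12) * f11"
          unfolding d_def by (simp add: algebra_simps)
        then have "M dvd a * d" using h1 h2 by (simp add: dvd_diff)
        then have "M dvd a" using cop by (simp add: coprime_dvd_mult_left_iff)
        then have "(a * g11) mod M = 0" "(a * g12) mod M = 0" by auto
        then show "x \<in> {replicate (2*m) 0}" using xa by (simp add: qt_zero)
      qed
    qed
    have sums: "{map2 (+) c d | c d. c \<in> ?C \<and> d \<in> ?D} = {v. length v = 2*m}"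
    proof
      show "{map2 (+) c d | c d. c \<in> ?C \<and> d \<in> ?D} \<subseteq> {v. length v = 2*m}"
      proof
        fix x assume "x \<in> {map2 (+) c d | c d. c \<in> ?C \<and> d \<in> ?D}"
        then obtain c d where x: "x = map2 (+) c d" and c: "c \<in> ?C" and d: "d \<in> ?D"
          by (auto simp only: mem_Collect_eq)
        from c obtain a where ca: "c = qt_vec m ((a * g11) mod M) ((a * g12) mod M)"
          unfolding one_gen_qt_code_def M_def by (auto simp only: mem_Collect_eq)
        from d obtain b where db: "d = qt_vec m ((b * f11) mod M) ((b * f12) mod M)"
          unfolding one_gen_qt_code_def M_def by (auto simp only: mem_Collect_eq)
        show "x \<in> {v. length v = 2*m}" unfolding x ca db qt_add by (simp add: qt_len)
      qed
      show "{v. length v = 2*m} \<subseteq> {map2 (+) c d | c d. c \<in> ?C \<and> d \<in> ?D}"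
      proof
        fix v :: "'a list" assume "v \<in> {v. length v = 2*m}"
        then have lv: "length v = 2*m" by simp
        obtain u0 u1 where u: "degree u0 < m" "degree u1 < m" "v = qt_vec m u0 u1"
          using qt_surj[OF assms(1) lv] by blast
        define a where "a = e * (u0 * f12 - u1 * f11)"
        define b where "b = e * (u1 * g11 - u0 * g12)"
        have e1: "a*g11 + b*f11 = u0 + u0 * (e*d - 1)"
          unfolding a_def b_def d_def by (simp add: algebra_simps)
        have e2: "a*g12 + b*f12 = u1 + u1 * (e*d - 1)"
          unfolding a_def b_def d_def by (simp add: algebra_simps)
        have m0: "u0 mod M = u0" "u1 mod M = u1"
          using u Mdeg by (simp_all add: mod_poly_less)
        have z0: "(u0 * (e*d - 1)) mod M = 0" using ed by simp
        have z1: "(u1 * (e*d - 1)) mod M = 0" using ed by simp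
        have r1: "(a*g11) mod M + (b*f11) mod M = u0"
          unfolding poly_mod_add_left[symmetric] e1 poly_mod_add_left m0 z0 by simp
        have r2: "(a*g12) mod M + (b*f12) mod M = u1"
          unfolding poly_mod_add_left[symmetric] e2 poly_mod_add_left m0 z1 by simp
        have "v = map2 (+) (qt_vec m ((a * g11) mod M) ((a * g12) mod M))
          (qt_vec m ((b * f11) mod M) ((b * f12) mod M))"
          unfolding qt_add r1 r2 u(3) ..
        moreover have "qt_vec m ((a * g11) mod M) ((a * g12) mod M) \<in> ?C"
          unfolding one_gen_qt_code_def M_def by auto
        moreover have "qt_vec m ((b * f11) mod M) ((b * f12) mod M) \<in> ?D"
          unfolding one_gen_qt_code_def M_def by auto
        ultimately show "v \<in> {map2 (+) c d | c d. c \<in> ?C \<and> d \<in> ?D}" by blast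
      qed
    qed
    show "is_LCP (2*m) ?C ?D" unfolding is_LCP_def by (intro conjI inter sums)
  qed
qed

end
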